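(* Let $\Phi=(V,C)$ be a $k$-uniform CNF formula such that each variable belongs to at most $d$ clauses, and let $\mu$ be the uniform distribution over its satisfying assignments. Let $k_\alpha,k_\beta\ge1$ be integers with $k_\alpha+k_\beta\le k$, and let $\mathcal{M}\subseteq V$ be such that every clause contains at least $k_\alpha$ variables of $\mathcal{M}$ and at least $k_\beta$ variables of $V\setminus\mathcal{M}$. If $2^{k_\beta}\ge 4\mathrm{e}dk$, then the support of the marginal distribution $\mu_{\mathcal{M}}$ is all of $\{0,1\}^{\mathcal{M}}$, and the Glauber dynamics $P_{\mathsf{Glauber}}$ on $\{0,1\}^{\mathcal{M}}$ has the unique stationary distribution $\mu_{\mathcal{M}}$.
   Context: A CNF formula is $k$-uniform if every clause contains exactly $k$ literals on distinct variables (never both $x$ and $\neg x$). $\mu_{\mathcal{M}}$ is the marginal of $\mu$ on $\mathcal{M}$ and $\mu_v(\cdot\mid\sigma)$ is the marginal of $\mu$ on variable $v$ conditioned on a partial assignment $\sigma$. The Glauber dynamics $P_{\mathsf{Glauber}}$: from state $X\in\{0,1\}^{\mathcal{M}}$, pick $v\in\mathcal{M}$ uniformly at random, keep $X(u)$ for $u\in\mathcal{M}\setminus\{v\}$, and resample $X(v)$ from $\mu_v(\cdot\mid X(\mathcal{M}\setminus\{v\}))$. *)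

theory Defs
  imports Complex_Main
begin

text \<open>A literal is a pair (variable, sign): (x, True) is x and (x, False) is the negation of x.
  A clause is a set of literals, a CNF formula is a set of clauses over the variable set V.\<close>

type_synonym 'v lit = "'v \<times> bool"
type_synonym 'v clause = "'v lit set"

definition clause_vars :: "'v clause \<Rightarrow> 'v set" where
  "clause_vars c = fst ` c"

definition cnf_formula :: "'v set \<Rightarrow> 'v clause set \<Rightarrow> bool" where
  "cnf_formula V C \<longleftrightarrow> finite V \<and> finite C \<and> (\<forall>c\<in>C. finite c \<and> clause_vars c \<subseteq> V)"

definition k_uniform :: "nat \<Rightarrow> 'v clause set \<Rightarrow> bool" where
  "k_uniform k C \<longleftrightarrow> (\<forall>c\<in>C. card c = k \<and> card (clause_vars c) = k)"

definition max_var_degree_le :: "'v set \<Rightarrow> 'v clause set \<Rightarrow> nat \<Rightarrow> bool" where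
  "max_var_degree_le V C d \<longleftrightarrow> (\<forall>x\<in>V. card {c\<in>C. x \<in> clause_vars c} \<le> d)"

definition satisfies :: "('v \<Rightarrow> bool) \<Rightarrow> 'v clause set \<Rightarrow> bool" where
  "satisfies \<sigma> C \<longleftrightarrow> (\<forall>c\<in>C. \<exists>(x, b)\<in>c. \<sigma> x = b)"

text \<open>Assignments {0,1}^S, represented as functions that are False outside S.\<close>
definition assigns :: "'v set \<Rightarrow> ('v \<Rightarrow> bool) set" where
  "assigns S = {\<sigma>. \<forall>x. x \<notin> S \<longrightarrow> \<sigma> x = False}"

definition restr :: "'v set \<Rightarrow> ('v \<Rightarrow> bool) \<Rightarrow> ('v \<Rightarrow> bool)" where
  "restr S \<sigma> = (\<lambda>x. if x \<in> S then \<sigma> x else False)"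

definition sat_assigns :: "'v set \<Rightarrow> 'v clause set \<Rightarrow> ('v \<Rightarrow> bool) set" where
  "sat_assigns V C = {\<sigma> \<in> assigns V. satisfies \<sigma> C}"

definition mu :: "'v set \<Rightarrow> 'v clause set \<Rightarrow> ('v \<Rightarrow> bool) \<Rightarrow> real" where
  "mu V C \<sigma> = (if \<sigma> \<in> sat_assigns V C then 1 / real (card (sat_assigns V C)) else 0)"

definition marg :: "'v set \<Rightarrow> 'v clause set \<Rightarrow> 'v set \<Rightarrow> ('v \<Rightarrow> bool) \<Rightarrow> real" where
  "marg V C M \<tau> = (\<Sum>\<sigma>\<in>{\<sigma> \<in> assigns V. restr M \<sigma> = \<tau>}. mu V C \<sigma>)"

definition cond_marg :: "'v set \<Rightarrow> 'v clause set \<Rightarrow> 'v \<Rightarrow> 'v set \<Rightarrow> ('v \<Rightarrow> bool) \<Rightarrow> bool \<Rightarrow> real" where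
  "cond_marg V C v L X b =
     (\<Sum>\<sigma>\<in>{\<sigma> \<in> assigns V. (\<forall>u\<in>L. \<sigma> u = X u) \<and> \<sigma> v = b}. mu V C \<sigma>) /
     (\<Sum>\<sigma>\<in>{\<sigma> \<in> assigns V. (\<forall>u\<in>L. \<sigma> u = X u)}. mu V C \<sigma>)"

definition glauber :: "'v set \<Rightarrow> 'v clause set \<Rightarrow> 'v set \<Rightarrow> ('v \<Rightarrow> bool) \<Rightarrow> ('v \<Rightarrow> bool) \<Rightarrow> real" where
  "glauber V C M X Y =
     (if M = {} then (if X = Y then 1 else 0)
      else (\<Sum>v\<in>M. if (\<forall>u\<in>M - {v}. Y u = X u) then cond_marg V C v (M - {v}) X (Y v) else 0)
           / real (card M))"

definition stationary :: "'s set \<Rightarrow> ('s \<Rightarrow> 's \<Rightarrow> real) \<Rightarrow> ('s \<Rightarrow> real) \<Rightarrow> bool" where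
  "stationary S P \<pi> \<longleftrightarrow> (\<forall>x\<in>S. \<pi> x \<ge> 0) \<and> sum \<pi> S = 1 \<and>
     (\<forall>y\<in>S. (\<Sum>x\<in>S. \<pi> x * P x y) = \<pi> y)"

end

theory Submission
  imports Defs
begin

definition Om :: "'v set \<Rightarrow> ('v \<Rightarrow> bool) \<Rightarrow> ('v \<Rightarrow> bool) set" where
  "Om W \<tau> = {\<sigma>. \<forall>x. x \<notin> W \<longrightarrow> \<sigma> x = \<tau> x}"

definition bad :: "'v clause \<Rightarrow> ('v \<Rightarrow> bool) \<Rightarrow> bool" where
  "bad c \<sigma> \<longleftrightarrow> \<not> (\<exists>(x, b)\<in>c. \<sigma> x = b)"

definition AS :: "'v set \<Rightarrow> ('v \<Rightarrow> bool) \<Rightarrow> 'v clause set \<Rightarrow> ('v \<Rightarrow> bool) set" where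
  "AS W \<tau> S = {\<sigma> \<in> Om W \<tau>. \<forall>c\<in>S. \<not> bad c \<sigma>}"

lemma finite_Om: "finite W \<Longrightarrow> finite (Om W \<tau>)"
proof -
  assume fW: "finite W"
  have "Om W \<tau> \<subseteq> (\<lambda>T x. if x \<in> W then x \<in> T else \<tau> x) ` Pow W"
  proof
    fix \<sigma> assume s: "\<sigma> \<in> Om W \<tau>"
    have "\<sigma> = (\<lambda>x. if x \<in> W then x \<in> {y\<in>W. \<sigma> y} else \<tau> x)"
      using s by (auto simp: Om_def)
    then show "\<sigma> \<in> (\<lambda>T x. if x \<in> W then x \<in> T else \<tau> x) ` Pow W" by blast
  qed
  then show ?thesis using fW by (meson finite_Pow_iff finite_imageI finite_subset)
qed

lemma tau_Om: "\<tau> \<in> Om W \<tau>" by (simp add: Om_def)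

lemma indep_count:
  assumes fW: "finite W" and fU: "finite U" and UW: "U \<subseteq> W" and EO: "E \<subseteq> Om W \<tau>"
    and cl: "\<forall>\<sigma>\<in>E. \<forall>\<sigma>'\<in>Om W \<tau>. (\<forall>x. x \<notin> U \<longrightarrow> \<sigma>' x = \<sigma> x) \<longrightarrow> \<sigma>' \<in> E"
  shows "card E = 2 ^ card U * card {\<sigma>\<in>E. \<forall>x\<in>U. \<sigma> x = g x}"
  using fU UW cl
proof (induction U rule: finite_induct)
  case empty
  then show ?case by simp
next
  case (insert u U)
  have clU: "\<forall>\<sigma>\<in>E. \<forall>\<sigma>'\<in>Om W \<tau>. (\<forall>x. x \<notin> U \<longrightarrow> \<sigma>' x = \<sigma> x) \<longrightarrow> \<sigma>' \<in> E"
    using insert.prems(2) by auto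
  have IH: "card E = 2 ^ card U * card {\<sigma>\<in>E. \<forall>x\<in>U. \<sigma> x = g x}"
    using insert.IH[OF _ clU] insert.prems(1) by simp
  define F where "F = {\<sigma>\<in>E. \<forall>x\<in>U. \<sigma> x = g x}"
  define F1 where "F1 = {\<sigma>\<in>F. \<sigma> u = g u}"
  define F2 where "F2 = {\<sigma>\<in>F. \<sigma> u \<noteq> g u}"
  have finF: "finite F" unfolding F_def using finite_Om[OF fW] EO
    by (metis (no_types, lifting) finite_subset mem_Collect_eq subsetI)
  have uW: "u \<in> W" using insert.prems by auto
  have flipE: "\<sigma>(u := \<not> \<sigma> u) \<in> E" if "\<sigma> \<in> E" for \<sigma>
  proof -
    have "\<sigma> \<in> Om W \<tau>" using that EO by auto
    then have "\<sigma>(u := \<not> \<sigma> u) \<in> Om W \<tau>" using uW by (auto simp: Om_def)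
    then show ?thesis using insert.prems(2) that by auto
  qed
  have bij: "bij_betw (\<lambda>\<sigma>. \<sigma>(u := \<not> \<sigma> u)) F1 F2"
  proof (rule bij_betw_byWitness[where f' = "\<lambda>\<sigma>. \<sigma>(u := \<not> \<sigma> u)"])
    show "\<forall>a\<in>F1. a(u := \<not> a u, u := \<not> (a(u := \<not> a u)) u) = a" by auto
    show "\<forall>a'\<in>F2. a'(u := \<not> a' u, u := \<not> (a'(u := \<not> a' u)) u) = a'" by auto
    have upd: "\<sigma>(u := \<not> \<sigma> u) \<in> E \<and> (\<forall>x\<in>U. (\<sigma>(u := \<not> \<sigma> u)) x = g x)"
      if "\<sigma> \<in> F" for \<sigma>
    proof -
      have a: "\<sigma> \<in> E" "\<forall>x\<in>U. \<sigma> x = g x" using that by (auto simp: F_def)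
      show ?thesis
      proof (intro conjI)
        show "\<sigma>(u := \<not> \<sigma> u) \<in> E" by (rule flipE[OF a(1)])
        show "\<forall>x\<in>U. (\<sigma>(u := \<not> \<sigma> u)) x = g x" using a(2) insert.hyps(2) by auto
      qed
    qed
    show "(\<lambda>\<sigma>. \<sigma>(u := \<not> \<sigma> u)) ` F1 \<subseteq> F2"
    proof clarify
      fix \<sigma> assume "\<sigma> \<in> F1"
      then have "\<sigma> \<in> F" "\<sigma> u = g u" by (auto simp: F1_def)
      then show "\<sigma>(u := \<not> \<sigma> u) \<in> F2" using upd[of \<sigma>] unfolding F2_def F_def by simp
    qed
    show "(\<lambda>\<sigma>. \<sigma>(u := \<not> \<sigma> u)) ` F2 \<subseteq> F1"
    proof clarify
      fix \<sigma> assume "\<sigma> \<in> F2"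
      then have "\<sigma> \<in> F" "\<sigma> u \<noteq> g u" by (auto simp: F2_def)
      then show "\<sigma>(u := \<not> \<sigma> u) \<in> F1" using upd[of \<sigma>] unfolding F1_def F_def by simp
    qed
  qed
  have "card F = card F1 + card F2"
  proof -
    have "F = F1 \<union> F2" "F1 \<inter> F2 = {}" by (auto simp: F1_def F2_def)
    then show ?thesis using finF by (metis card_Un_disjoint finite_Un)
  qed
  moreover have "card F2 = card F1" using bij bij_betw_same_card by metis
  moreover have "F1 = {\<sigma>\<in>E. \<forall>x\<in>insert u U. \<sigma> x = g x}" by (auto simp: F1_def F_def)
  ultimately show ?case using IH insert.hyps by (simp add: F_def)
qed

lemma bad_count:
  assumes fW: "finite W" and EO: "E \<subseteq> Om W \<tau>"
    and cl: "\<forall>\<sigma>\<in>E. \<forall>\<sigma>'\<in>Om W \<tau>. (\<forall>x. x \<notin> clause_vars c \<inter> W \<longrightarrow> \<sigma>' x = \<sigma> x) \<longrightarrow> \<sigma>' \<in> E"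
  shows "2 ^ card (clause_vars c \<inter> W) * card {\<sigma>\<in>E. bad c \<sigma>} \<le> card E"
proof -
  let ?U = "clause_vars c \<inter> W"
  define g where "g x = (\<not> snd (SOME l. l \<in> c \<and> fst l = x))" for x
  have key: "\<sigma> x = g x" if s: "bad c \<sigma>" and x: "x \<in> ?U" for \<sigma> x
  proof -
    from x have "\<exists>l. l \<in> c \<and> fst l = x" by (auto simp: clause_vars_def)
    then have l: "(SOME l. l \<in> c \<and> fst l = x) \<in> c \<and> fst (SOME l. l \<in> c \<and> fst l = x) = x"
      using someI_ex[of "\<lambda>l. l \<in> c \<and> fst l = x"] by blast
    obtain y b where yb: "(SOME l. l \<in> c \<and> fst l = x) = (y, b)" by fastforce
    have "(y, b) \<in> c" "y = x" using l yb by auto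
    moreover have "g x = (\<not> b)" unfolding g_def using yb by simp
    ultimately show "\<sigma> x = g x" using s unfolding bad_def by auto
  qed
  have sub: "{\<sigma>\<in>E. bad c \<sigma>} \<subseteq> {\<sigma>\<in>E. \<forall>x\<in>?U. \<sigma> x = g x}"
    using key by blast
  have finE: "finite E" using finite_Om[OF fW] EO finite_subset by blast
  have "card {\<sigma>\<in>E. bad c \<sigma>} \<le> card {\<sigma>\<in>E. \<forall>x\<in>?U. \<sigma> x = g x}"
    using sub finE by (intro card_mono) auto
  moreover have "card E = 2 ^ card ?U * card {\<sigma>\<in>E. \<forall>x\<in>?U. \<sigma> x = g x}"
    by (rule indep_count[OF fW _ _ EO cl]) (use fW in auto)
  ultimately show ?thesis by simp
qed

lemma AS_closed:
  assumes "\<forall>c'\<in>S. clause_vars c \<inter> W \<inter> (clause_vars c' \<inter> W) = {}"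
  shows "\<forall>\<sigma>\<in>AS W \<tau> S. \<forall>\<sigma>'\<in>Om W \<tau>. (\<forall>x. x \<notin> clause_vars c \<inter> W \<longrightarrow> \<sigma>' x = \<sigma> x) \<longrightarrow> \<sigma>' \<in> AS W \<tau> S"
proof (intro ballI impI)
  fix \<sigma> \<sigma>' assume s: "\<sigma> \<in> AS W \<tau> S" and s': "\<sigma>' \<in> Om W \<tau>"
    and ag: "\<forall>x. x \<notin> clause_vars c \<inter> W \<longrightarrow> \<sigma>' x = \<sigma> x"
  show "\<sigma>' \<in> AS W \<tau> S" unfolding AS_def
  proof (intro CollectI conjI ballI)
    show "\<sigma>' \<in> Om W \<tau>" by fact
    fix c' assume c': "c' \<in> S"
    then obtain x b where xb: "(x, b) \<in> c'" "\<sigma> x = b" using s by (auto simp: AS_def bad_def)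
    have "x \<in> clause_vars c'" using xb(1) by (force simp: clause_vars_def)
    then have "x \<notin> clause_vars c \<inter> W" using assms c' by blast
    then have "\<sigma>' x = b" using ag xb by simp
    then show "\<not> bad c' \<sigma>'" using xb(1) by (auto simp: bad_def)
  qed
qed

lemma finite_AS: "finite W \<Longrightarrow> finite (AS W \<tau> S)"
  using finite_Om[of W \<tau>] unfolding AS_def by (rule rev_finite_subset) auto

lemma AS_anti: "S2 \<subseteq> S \<Longrightarrow> AS W \<tau> S \<subseteq> AS W \<tau> S2"
  unfolding AS_def by auto

lemma lll_step:
  assumes fW: "finite W" and fD: "finite D"
    and kb: "\<forall>c\<in>D. card (clause_vars c \<inter> W) \<ge> kb"
    and deg: "\<forall>c\<in>D. card {c'\<in>D. c' \<noteq> c \<and> clause_vars c \<inter> W \<inter> (clause_vars c' \<inter> W) \<noteq> {}} \<le> \<Delta>"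
    and ratio: "4 * real \<Delta> \<le> 2 ^ kb"
  shows "S \<subseteq> D \<Longrightarrow> c \<in> D \<Longrightarrow> c \<notin> S \<Longrightarrow>
    real (card {\<sigma>\<in>AS W \<tau> S. bad c \<sigma>}) \<le> 2 / 2 ^ kb * real (card (AS W \<tau> S))"
proof (induction "card S" arbitrary: S c rule: less_induct)
  case less
  define U where "U = clause_vars c \<inter> W"
  define S1 where "S1 = {c'\<in>S. U \<inter> (clause_vars c' \<inter> W) \<noteq> {}}"
  define S2 where "S2 = S - S1"
  have fS: "finite S" using less.prems(1) fD finite_subset by blast
  have disj: "\<forall>c'\<in>S2. clause_vars c \<inter> W \<inter> (clause_vars c' \<inter> W) = {}"
    unfolding S2_def S1_def U_def by blast
  have AO: "AS W \<tau> S2 \<subseteq> Om W \<tau>" unfolding AS_def by auto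
  have bc: "2 ^ card U * card {\<sigma>\<in>AS W \<tau> S2. bad c \<sigma>} \<le> card (AS W \<tau> S2)"
    unfolding U_def by (rule bad_count[OF fW AO AS_closed[OF disj]])
  have kbU: "kb \<le> card U" using kb less.prems(2) unfolding U_def by auto
  have pos: "(0::real) < 2 ^ kb" by simp
  have "(2::real) ^ kb * real (card {\<sigma>\<in>AS W \<tau> S2. bad c \<sigma>}) \<le> (2::real) ^ card U * real (card {\<sigma>\<in>AS W \<tau> S2. bad c \<sigma>})"
    by (intro mult_right_mono power_increasing kbU) auto
  also have "\<dots> \<le> real (card (AS W \<tau> S2))"
  proof -
    have "real (2 ^ card U * card {\<sigma>\<in>AS W \<tau> S2. bad c \<sigma>}) \<le> real (card (AS W \<tau> S2))"
      using bc by (simp only: of_nat_le_iff)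
    then show ?thesis by simp
  qed
  finally have bc': "real (card {\<sigma>\<in>AS W \<tau> S2. bad c \<sigma>}) \<le> real (card (AS W \<tau> S2)) / 2 ^ kb"
    using pos by (simp add: field_simps)
  have S2S: "S2 \<subseteq> S" unfolding S2_def by auto
  have sub: "{\<sigma>\<in>AS W \<tau> S. bad c \<sigma>} \<subseteq> {\<sigma>\<in>AS W \<tau> S2. bad c \<sigma>}"
    using AS_anti[OF S2S] by auto
  have c1: "real (card {\<sigma>\<in>AS W \<tau> S. bad c \<sigma>}) \<le> real (card {\<sigma>\<in>AS W \<tau> S2. bad c \<sigma>})"
    using sub finite_AS[OF fW] by (simp add: card_mono)
  have main: "real (card (AS W \<tau> S2)) \<le> 2 * real (card (AS W \<tau> S))"
  proof (cases "S1 = {}")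
    case True
    then have "S2 = S" unfolding S2_def by simp
    then show ?thesis by simp
  next
    case False
    have "S1 \<subseteq> S" unfolding S1_def by auto
    then have "S2 \<subset> S" using False unfolding S2_def by blast
    then have lt: "card S2 < card S" using fS by (rule psubset_card_mono[rotated])
    have IH: "real (card {\<sigma>\<in>AS W \<tau> S2. bad c' \<sigma>}) \<le> 2 / 2 ^ kb * real (card (AS W \<tau> S2))"
      if "c' \<in> S1" for c'
    proof (rule less.hyps[OF lt])
      show "S2 \<subseteq> D" using S2S less.prems(1) by auto
      show "c' \<in> D" using that less.prems(1) unfolding S1_def by auto
      show "c' \<notin> S2" using that unfolding S2_def by auto
    qed
    have cover: "AS W \<tau> S2 \<subseteq> AS W \<tau> S \<union> (\<Union>c'\<in>S1. {\<sigma>\<in>AS W \<tau> S2. bad c' \<sigma>})"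
      unfolding AS_def S2_def by auto
    have fS1: "finite S1" using fS unfolding S1_def by auto
    have "card (AS W \<tau> S2) \<le> card (AS W \<tau> S \<union> (\<Union>c'\<in>S1. {\<sigma>\<in>AS W \<tau> S2. bad c' \<sigma>}))"
      using cover finite_AS[OF fW] fS1 by (intro card_mono) auto
    also have "\<dots> \<le> card (AS W \<tau> S) + card (\<Union>c'\<in>S1. {\<sigma>\<in>AS W \<tau> S2. bad c' \<sigma>})"
      by (rule card_Un_le)
    also have "\<dots> \<le> card (AS W \<tau> S) + (\<Sum>c'\<in>S1. card {\<sigma>\<in>AS W \<tau> S2. bad c' \<sigma>})"
      using card_UN_le[OF fS1] by simp
    finally have "real (card (AS W \<tau> S2)) \<le> real (card (AS W \<tau> S) + (\<Sum>c'\<in>S1. card {\<sigma>\<in>AS W \<tau> S2. bad c' \<sigma>}))"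
      by (simp only: of_nat_le_iff)
    then have "real (card (AS W \<tau> S2)) \<le> real (card (AS W \<tau> S)) + (\<Sum>c'\<in>S1. real (card {\<sigma>\<in>AS W \<tau> S2. bad c' \<sigma>}))"
      by simp
    also have "(\<Sum>c'\<in>S1. real (card {\<sigma>\<in>AS W \<tau> S2. bad c' \<sigma>})) \<le> (\<Sum>c'\<in>S1. 2 / 2 ^ kb * real (card (AS W \<tau> S2)))"
      using IH by (rule sum_mono)
    also have "\<dots> = real (card S1) * (2 / 2 ^ kb) * real (card (AS W \<tau> S2))" by simp
    also have "\<dots> \<le> real \<Delta> * (2 / 2 ^ kb) * real (card (AS W \<tau> S2))"
    proof -
      have "S1 \<subseteq> {c'\<in>D. c' \<noteq> c \<and> clause_vars c \<inter> W \<inter> (clause_vars c' \<inter> W) \<noteq> {}}"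
        using less.prems unfolding S1_def U_def by auto
      then have "card S1 \<le> card {c'\<in>D. c' \<noteq> c \<and> clause_vars c \<inter> W \<inter> (clause_vars c' \<inter> W) \<noteq> {}}"
        using fD by (intro card_mono) auto
      then have "card S1 \<le> \<Delta>" using deg less.prems(2) by (meson le_trans)
      then show ?thesis by (intro mult_right_mono) auto
    qed
    also have "\<dots> \<le> 1 / 2 * real (card (AS W \<tau> S2))"
    proof (intro mult_right_mono)
      show "real \<Delta> * (2 / 2 ^ kb) \<le> 1 / 2" using ratio pos by (simp add: field_simps)
    qed auto
    finally show ?thesis by simp
  qed
  have "real (card {\<sigma>\<in>AS W \<tau> S. bad c \<sigma>}) \<le> real (card (AS W \<tau> S2)) / 2 ^ kb"
    using c1 bc' by linarith
  also have "\<dots> \<le> 2 * real (card (AS W \<tau> S)) / 2 ^ kb"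
    using main pos by (simp add: divide_right_mono)
  finally show ?case by simp
qed

lemma lll_nonempty:
  assumes fW: "finite W" and fD: "finite D"
    and kb: "\<forall>c\<in>D. card (clause_vars c \<inter> W) \<ge> kb"
    and deg: "\<forall>c\<in>D. card {c'\<in>D. c' \<noteq> c \<and> clause_vars c \<inter> W \<inter> (clause_vars c' \<inter> W) \<noteq> {}} \<le> \<Delta>"
    and ratio: "4 * real \<Delta> \<le> 2 ^ kb" and four: "4 \<le> (2::real) ^ kb"
  shows "S \<subseteq> D \<Longrightarrow> card (AS W \<tau> S) > 0"
proof -
  assume SD: "S \<subseteq> D"
  have fS: "finite S" using SD fD finite_subset by blast
  show ?thesis using fS SD
  proof (induction S rule: finite_induct)
    case empty
    have "AS W \<tau> {} = Om W \<tau>" unfolding AS_def by auto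
    then show ?case using finite_Om[OF fW] tau_Om[of \<tau> W] by (simp add: card_gt_0_iff) blast
  next
    case (insert c S)
    have IH: "card (AS W \<tau> S) > 0" using insert by auto
    have st: "real (card {\<sigma>\<in>AS W \<tau> S. bad c \<sigma>}) \<le> 2 / 2 ^ kb * real (card (AS W \<tau> S))"
      using lll_step[OF fW fD kb deg ratio, of S c \<tau>] insert by auto
    have eq: "AS W \<tau> (insert c S) = AS W \<tau> S - {\<sigma>\<in>AS W \<tau> S. bad c \<sigma>}"
      unfolding AS_def by auto
    have "card (AS W \<tau> (insert c S)) = card (AS W \<tau> S) - card {\<sigma>\<in>AS W \<tau> S. bad c \<sigma>}"
      unfolding eq using finite_AS[OF fW] by (intro card_Diff_subset) auto
    moreover have "2 / 2 ^ kb \<le> (1/2::real)" using four by (simp add: field_simps)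
    then have "2 / 2 ^ kb * real (card (AS W \<tau> S)) \<le> 1/2 * real (card (AS W \<tau> S))"
      by (rule mult_right_mono) auto
    then have "real (card {\<sigma>\<in>AS W \<tau> S. bad c \<sigma>}) < real (card (AS W \<tau> S))"
      using st IH by linarith
    ultimately show ?case by simp
  qed
qed

lemma finite_assigns: "finite V \<Longrightarrow> finite (assigns V)"
proof -
  assume fV: "finite V"
  have "assigns V \<subseteq> (\<lambda>T x. x \<in> T) ` Pow V"
  proof
    fix \<sigma> assume s: "\<sigma> \<in> assigns V"
    have "\<sigma> = (\<lambda>x. x \<in> {y\<in>V. \<sigma> y})" using s by (auto simp: assigns_def)
    then show "\<sigma> \<in> (\<lambda>T x. x \<in> T) ` Pow V" by blast
  qed
  then show ?thesis using fV by (meson finite_Pow_iff finite_imageI finite_subset)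
qed

lemma mu_nonneg: "mu V C \<sigma> \<ge> 0" by (simp add: mu_def)

lemma marg_nonneg: "marg V C M \<tau> \<ge> 0" unfolding marg_def by (intro sum_nonneg mu_nonneg)

lemma marg_alt: "\<tau> \<in> assigns M \<Longrightarrow>
   marg V C M \<tau> = (\<Sum>\<sigma>\<in>{\<sigma>\<in>assigns V. \<forall>u\<in>M. \<sigma> u = \<tau> u}. mu V C \<sigma>)"
proof -
  assume t: "\<tau> \<in> assigns M"
  have "{\<sigma>\<in>assigns V. restr M \<sigma> = \<tau>} = {\<sigma>\<in>assigns V. \<forall>u\<in>M. \<sigma> u = \<tau> u}"
  proof (intro Collect_cong conj_cong refl iffI)
    fix \<sigma> assume "restr M \<sigma> = \<tau>" then show "\<forall>u\<in>M. \<sigma> u = \<tau> u" by (auto simp: restr_def)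
  next
    fix \<sigma> assume "\<forall>u\<in>M. \<sigma> u = \<tau> u" then show "restr M \<sigma> = \<tau>"
      using t by (auto simp: restr_def assigns_def)
  qed
  then show ?thesis unfolding marg_def by simp
qed

definition Dn :: "'v set \<Rightarrow> 'v clause set \<Rightarrow> 'v set \<Rightarrow> ('v \<Rightarrow> bool) \<Rightarrow> 'v \<Rightarrow> real" where
  "Dn V C M X v = marg V C M (X(v := True)) + marg V C M (X(v := False))"

lemma upd_assigns: "X \<in> assigns M \<Longrightarrow> v \<in> M \<Longrightarrow> X(v := b) \<in> assigns M"
  by (auto simp: assigns_def)

lemma cm_eq:
  assumes fV: "finite V" and X: "X \<in> assigns M" and v: "v \<in> M"
  shows "cond_marg V C v (M - {v}) X b = marg V C M (X(v := b)) / Dn V C M X v"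
proof -
  have num: "{\<sigma> \<in> assigns V. (\<forall>u\<in>M - {v}. \<sigma> u = X u) \<and> \<sigma> v = b'} =
    {\<sigma>\<in>assigns V. \<forall>u\<in>M. \<sigma> u = (X(v := b')) u}" for b'
    using v by auto
  have den: "{\<sigma> \<in> assigns V. (\<forall>u\<in>M - {v}. \<sigma> u = X u)} =
     {\<sigma> \<in> assigns V. (\<forall>u\<in>M - {v}. \<sigma> u = X u) \<and> \<sigma> v = True} \<union>
     {\<sigma> \<in> assigns V. (\<forall>u\<in>M - {v}. \<sigma> u = X u) \<and> \<sigma> v = False}" by auto
  have fin: "finite {\<sigma> \<in> assigns V. P \<sigma>}" for P using finite_assigns[OF fV] by auto
  have "(\<Sum>\<sigma>\<in>{\<sigma> \<in> assigns V. (\<forall>u\<in>M - {v}. \<sigma> u = X u)}. mu V C \<sigma>) =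
    (\<Sum>\<sigma>\<in>{\<sigma> \<in> assigns V. (\<forall>u\<in>M - {v}. \<sigma> u = X u) \<and> \<sigma> v = True}. mu V C \<sigma>) +
    (\<Sum>\<sigma>\<in>{\<sigma> \<in> assigns V. (\<forall>u\<in>M - {v}. \<sigma> u = X u) \<and> \<sigma> v = False}. mu V C \<sigma>)"
    unfolding den by (rule sum.union_disjoint) (use fin in auto)
  also have "\<dots> = Dn V C M X v"
    unfolding Dn_def num using marg_alt[OF upd_assigns[OF X v]] by simp
  finally have d: "(\<Sum>\<sigma>\<in>{\<sigma> \<in> assigns V. (\<forall>u\<in>M - {v}. \<sigma> u = X u)}. mu V C \<sigma>) = Dn V C M X v" .
  show ?thesis unfolding cond_marg_def d num using marg_alt[OF upd_assigns[OF X v]] by simp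
qed

lemma upd_eq: "X \<in> assigns M \<Longrightarrow> Y \<in> assigns M \<Longrightarrow> v \<in> M \<Longrightarrow> \<forall>u\<in>M - {v}. Y u = X u \<Longrightarrow> X(v := b) = Y(v := b)"
  by (rule ext) (auto simp: assigns_def)

lemma upd_self: "X \<in> assigns M \<Longrightarrow> Y \<in> assigns M \<Longrightarrow> v \<in> M \<Longrightarrow> \<forall>u\<in>M - {v}. Y u = X u \<Longrightarrow> X(v := Y v) = Y"
  by (rule ext) (auto simp: assigns_def)

lemma glauber_ne:
  assumes fV: "finite V" and X: "X \<in> assigns M" and Y: "Y \<in> assigns M" and M: "M \<noteq> {}"
  shows "glauber V C M X Y = (\<Sum>v\<in>M. if (\<forall>u\<in>M - {v}. Y u = X u) then marg V C M Y / Dn V C M X v else 0) / real (card M)"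
proof -
  have "(\<Sum>v\<in>M. if (\<forall>u\<in>M - {v}. Y u = X u) then cond_marg V C v (M - {v}) X (Y v) else 0) =
        (\<Sum>v\<in>M. if (\<forall>u\<in>M - {v}. Y u = X u) then marg V C M Y / Dn V C M X v else 0)"
  proof (rule sum.cong[OF refl])
    fix v assume v: "v \<in> M"
    show "(if (\<forall>u\<in>M - {v}. Y u = X u) then cond_marg V C v (M - {v}) X (Y v) else 0) =
        (if (\<forall>u\<in>M - {v}. Y u = X u) then marg V C M Y / Dn V C M X v else 0)"
      using cm_eq[OF fV X v] upd_self[OF X Y v] by auto
  qed
  then show ?thesis unfolding glauber_def using M by simp
qed

lemma detailed_balance:
  assumes fV: "finite V" and X: "X \<in> assigns M" and Y: "Y \<in> assigns M"
  shows "marg V C M X * glauber V C M X Y = marg V C M Y * glauber V C M Y X"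
proof (cases "M = {}")
  case True
  then show ?thesis unfolding glauber_def by auto
next
  case False
  have "marg V C M X * glauber V C M X Y =
     (\<Sum>v\<in>M. if (\<forall>u\<in>M - {v}. Y u = X u) then marg V C M X * marg V C M Y / Dn V C M X v else 0) / real (card M)"
    unfolding glauber_ne[OF fV X Y False]
    by (simp only: times_divide_eq_right sum_distrib_left)
       (intro arg_cong[where f="\<lambda>s. s / real (card M)"] sum.cong, auto)
  also have "\<dots> = (\<Sum>v\<in>M. if (\<forall>u\<in>M - {v}. X u = Y u) then marg V C M Y * marg V C M X / Dn V C M Y v else 0) / real (card M)"
  proof -
    have "(\<Sum>v\<in>M. if (\<forall>u\<in>M - {v}. Y u = X u) then marg V C M X * marg V C M Y / Dn V C M X v else 0) =
      (\<Sum>v\<in>M. if (\<forall>u\<in>M - {v}. X u = Y u) then marg V C M Y * marg V C M X / Dn V C M Y v else 0)"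
    proof (rule sum.cong[OF refl])
      fix v assume v: "v \<in> M"
      show "(if (\<forall>u\<in>M - {v}. Y u = X u) then marg V C M X * marg V C M Y / Dn V C M X v else 0) =
        (if (\<forall>u\<in>M - {v}. X u = Y u) then marg V C M Y * marg V C M X / Dn V C M Y v else 0)"
      proof (cases "\<forall>u\<in>M - {v}. Y u = X u")
        case True
        then have "Dn V C M X v = Dn V C M Y v" unfolding Dn_def
          using upd_eq[OF X Y v True] by metis
        then show ?thesis using True by (simp add: mult.commute)
      next
        case False
        then have nQ: "\<not> (\<forall>u\<in>M - {v}. X u = Y u)" by auto
        show ?thesis by (simp only: if_not_P[OF False] if_not_P[OF nQ])
      qed
    qed
    then show ?thesis by simp
  qed
  also have "\<dots> = marg V C M Y * glauber V C M Y X"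
    unfolding glauber_ne[OF fV Y X False]
    by (simp only: times_divide_eq_right sum_distrib_left)
       (intro arg_cong[where f="\<lambda>s. s / real (card M)"] sum.cong, auto)
  finally show ?thesis .
qed

lemma cm_nonneg: "cond_marg V C v L X b \<ge> 0"
  unfolding cond_marg_def by (intro divide_nonneg_nonneg sum_nonneg mu_nonneg)

lemma glauber_nonneg: "glauber V C M X Y \<ge> 0"
proof -
  have "0 \<le> (\<Sum>v\<in>M. if (\<forall>u\<in>M - {v}. Y u = X u) then cond_marg V C v (M - {v}) X (Y v) else 0)"
    by (rule sum_nonneg) (simp add: cm_nonneg)
  then show ?thesis unfolding glauber_def by simp
qed

lemma row_sum:
  assumes fV: "finite V" and MV: "M \<subseteq> V" and X: "X \<in> assigns M"
    and pos: "\<forall>\<tau>\<in>assigns M. marg V C M \<tau> > 0"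
  shows "(\<Sum>Y\<in>assigns M. glauber V C M X Y) = 1"
proof (cases "M = {}")
  case True
  then show ?thesis unfolding glauber_def using X finite_assigns[of M] by (simp add: sum.delta)
next
  case False
  have fM: "finite M" using fV MV finite_subset by blast
  have fA: "finite (assigns M)" by (rule finite_assigns[OF fM])
  have inner: "(\<Sum>Y\<in>assigns M. if (\<forall>u\<in>M - {v}. Y u = X u) then cond_marg V C v (M - {v}) X (Y v) else 0) = 1"
    if v: "v \<in> M" for v
  proof -
    have set: "{Y\<in>assigns M. \<forall>u\<in>M - {v}. Y u = X u} = {X(v := True), X(v := False)}"
    proof
      show "{Y\<in>assigns M. \<forall>u\<in>M - {v}. Y u = X u} \<subseteq> {X(v := True), X(v := False)}"
      proof
        fix Y assume "Y \<in> {Y\<in>assigns M. \<forall>u\<in>M - {v}. Y u = X u}"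
        then have "Y \<in> assigns M" "\<forall>u\<in>M - {v}. Y u = X u" by auto
        then have "X(v := Y v) = Y" using upd_self[OF X _ v] by blast
        then show "Y \<in> {X(v := True), X(v := False)}" by (cases "Y v") auto
      qed
      show "{X(v := True), X(v := False)} \<subseteq> {Y\<in>assigns M. \<forall>u\<in>M - {v}. Y u = X u}"
        using upd_assigns[OF X v] by auto
    qed
    have ne: "X(v := True) \<noteq> X(v := False)" by (metis fun_upd_same)
    have "(\<Sum>Y\<in>assigns M. if (\<forall>u\<in>M - {v}. Y u = X u) then cond_marg V C v (M - {v}) X (Y v) else 0)
       = (\<Sum>Y\<in>{Y\<in>assigns M. \<forall>u\<in>M - {v}. Y u = X u}. cond_marg V C v (M - {v}) X (Y v))"
      by (rule sum.inter_filter[OF fA, symmetric])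
    also have "\<dots> = cond_marg V C v (M - {v}) X True + cond_marg V C v (M - {v}) X False"
      unfolding set using ne by simp
    also have "\<dots> = 1"
    proof -
      have "marg V C M (X(v := True)) > 0" using pos upd_assigns[OF X v] by blast
      moreover have "marg V C M (X(v := False)) \<ge> 0" by (rule marg_nonneg)
      ultimately have "Dn V C M X v > 0" unfolding Dn_def by linarith
      then show ?thesis unfolding cm_eq[OF fV X v] Dn_def by (simp add: add_divide_distrib[symmetric])
    qed
    finally show ?thesis .
  qed
  have "(\<Sum>Y\<in>assigns M. glauber V C M X Y) =
    (\<Sum>Y\<in>assigns M. \<Sum>v\<in>M. if (\<forall>u\<in>M - {v}. Y u = X u) then cond_marg V C v (M - {v}) X (Y v) else 0) / real (card M)"
    unfolding glauber_def using False by (simp add: sum_divide_distrib)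
  also have "\<dots> = (\<Sum>v\<in>M. \<Sum>Y\<in>assigns M. if (\<forall>u\<in>M - {v}. Y u = X u) then cond_marg V C v (M - {v}) X (Y v) else 0) / real (card M)"
    by (subst sum.swap) simp
  also have "\<dots> = (\<Sum>v\<in>M. 1) / real (card M)" using inner by simp
  also have "\<dots> = 1" using False fM by simp
  finally show ?thesis .
qed

lemma flip_pos:
  assumes fV: "finite V" and MV: "M \<subseteq> V" and X: "X \<in> assigns M" and u: "u \<in> M"
    and pos: "\<forall>\<tau>\<in>assigns M. marg V C M \<tau> > 0"
  shows "glauber V C M X (X(u := b)) > 0"
proof -
  have fM: "finite M" using fV MV finite_subset by blast
  have M: "M \<noteq> {}" using u by auto
  define f where "f v = (if (\<forall>w\<in>M - {v}. (X(u := b)) w = X w) then cond_marg V C v (M - {v}) X ((X(u := b)) v) else 0)" for v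
  have fnn: "f v \<ge> 0" for v unfolding f_def using cm_nonneg by auto
  have "f u = marg V C M (X(u := b)) / Dn V C M X u"
    unfolding f_def using cm_eq[OF fV X u] by simp
  moreover have "marg V C M (X(u := b)) > 0" using pos upd_assigns[OF X u] by blast
  moreover have "Dn V C M X u > 0"
  proof -
    have "marg V C M (X(u := True)) > 0" using pos upd_assigns[OF X u] by blast
    moreover have "marg V C M (X(u := False)) \<ge> 0" by (rule marg_nonneg)
    ultimately show ?thesis unfolding Dn_def by linarith
  qed
  ultimately have "f u > 0" by simp
  moreover have "f u \<le> sum f M" using fnn fM u by (intro member_le_sum) auto
  ultimately have "sum f M > 0" by linarith
  moreover have "glauber V C M X (X(u := b)) = sum f M / real (card M)"
    unfolding glauber_def f_def by (rule if_not_P[OF M])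
  ultimately show ?thesis using M fM by (simp add: card_gt_0_iff)
qed

lemma deg_bound:
  assumes fC: "finite C" and fc: "\<forall>c\<in>C. finite c \<and> clause_vars c \<subseteq> V"
    and deg: "max_var_degree_le V C d" and unif: "k_uniform k C" and c: "c \<in> C"
  shows "card {c'\<in>C. c' \<noteq> c \<and> clause_vars c \<inter> W \<inter> (clause_vars c' \<inter> W) \<noteq> {}} \<le> k * (d - 1)"
proof -
  have fv: "finite (clause_vars c)" using fc c by (simp add: clause_vars_def)
  have sub: "{c'\<in>C. c' \<noteq> c \<and> clause_vars c \<inter> W \<inter> (clause_vars c' \<inter> W) \<noteq> {}}
     \<subseteq> (\<Union>x\<in>clause_vars c. {c'\<in>C. x \<in> clause_vars c'} - {c})" by blast
  have "card {c'\<in>C. c' \<noteq> c \<and> clause_vars c \<inter> W \<inter> (clause_vars c' \<inter> W) \<noteq> {}}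
     \<le> card (\<Union>x\<in>clause_vars c. {c'\<in>C. x \<in> clause_vars c'} - {c})"
    using fv fC by (intro card_mono[OF _ sub]) auto
  also have "\<dots> \<le> (\<Sum>x\<in>clause_vars c. card ({c'\<in>C. x \<in> clause_vars c'} - {c}))"
    by (rule card_UN_le[OF fv])
  also have "\<dots> \<le> (\<Sum>x\<in>clause_vars c. d - 1)"
  proof (rule sum_mono)
    fix x assume x: "x \<in> clause_vars c"
    then have "x \<in> V" using fc c by auto
    then have "card {c'\<in>C. x \<in> clause_vars c'} \<le> d" using deg by (auto simp: max_var_degree_le_def)
    moreover have "c \<in> {c'\<in>C. x \<in> clause_vars c'}" using x c by auto
    moreover have "finite {c'\<in>C. x \<in> clause_vars c'}" using fC by auto
    ultimately show "card ({c'\<in>C. x \<in> clause_vars c'} - {c}) \<le> d - 1"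
      by (simp add: card_Diff_singleton)
  qed
  also have "\<dots> = k * (d - 1)" using unif c by (simp add: k_uniform_def)
  finally show ?thesis .
qed

lemma exists_ext:
  fixes V M :: "'v set" and C :: "'v clause set" and k d k\<^sub>\<alpha> k\<^sub>\<beta> :: nat
  assumes "cnf_formula V C"
    and "k_uniform k C"
    and "max_var_degree_le V C d"
    and "k\<^sub>\<alpha> \<ge> 1" and "k\<^sub>\<beta> \<ge> 1" and "k\<^sub>\<alpha> + k\<^sub>\<beta> \<le> k"
    and "M \<subseteq> V"
    and "\<forall>c\<in>C. card (clause_vars c \<inter> M) \<ge> k\<^sub>\<alpha> \<and> card (clause_vars c - M) \<ge> k\<^sub>\<beta>"
    and "(2::real) ^ k\<^sub>\<beta> \<ge> 4 * exp 1 * real d * real k"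
    and tau: "\<tau> \<in> assigns M"
  shows "\<exists>\<sigma>\<in>sat_assigns V C. restr M \<sigma> = \<tau>"
proof -
  have fV: "finite V" and fC: "finite C" and fc: "\<forall>c\<in>C. finite c \<and> clause_vars c \<subseteq> V"
    using assms(1) by (auto simp: cnf_formula_def)
  define W where "W = V - M"
  have fW: "finite W" using fV unfolding W_def by auto
  have "\<exists>\<sigma>\<in>Om W \<tau>. \<forall>c\<in>C. \<not> bad c \<sigma>"
  proof (cases "C = {}")
    case True
    then show ?thesis using tau_Om by blast
  next
    case False
    then obtain c0 where c0: "c0 \<in> C" by auto
    have k1: "k \<ge> 2" using assms(4-6) by linarith
    then have "card (clause_vars c0) \<ge> 2" using assms(2) c0 by (simp add: k_uniform_def)
    then obtain x where x: "x \<in> clause_vars c0" by (metis all_not_in_conv card.empty not_numeral_le_zero)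
    have "x \<in> V" using x fc c0 by auto
    then have "card {c'\<in>C. x \<in> clause_vars c'} \<le> d" using assms(3) by (auto simp: max_var_degree_le_def)
    moreover have "card {c'\<in>C. x \<in> clause_vars c'} \<ge> 1"
    proof -
      have "c0 \<in> {c'\<in>C. x \<in> clause_vars c'}" using x c0 by auto
      moreover have "finite {c'\<in>C. x \<in> clause_vars c'}" using fC by auto
      ultimately have "card {c'\<in>C. x \<in> clause_vars c'} > 0" using card_gt_0_iff by blast
      then show ?thesis by simp
    qed
    ultimately have d1: "d \<ge> 1" by linarith
    have kb: "\<forall>c\<in>C. card (clause_vars c \<inter> W) \<ge> k\<^sub>\<beta>"
    proof
      fix c assume c: "c \<in> C"
      have "clause_vars c \<inter> W = clause_vars c - M" using fc c unfolding W_def by auto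
      then show "card (clause_vars c \<inter> W) \<ge> k\<^sub>\<beta>" using assms(8) c by auto
    qed
    have deg: "\<forall>c\<in>C. card {c'\<in>C. c' \<noteq> c \<and> clause_vars c \<inter> W \<inter> (clause_vars c' \<inter> W) \<noteq> {}} \<le> k * (d - 1)"
      using deg_bound[OF fC fc assms(3) assms(2)] by blast
    have e1: "exp (1::real) \<ge> 1" by simp
    have kd: "real k * real d \<ge> 1"
    proof -
      have "1 \<le> real k" "1 \<le> real d" using k1 d1 by auto
      then show ?thesis by (metis mult_mono' mult_1 zero_le_one)
    qed
    have "4 * real (k * (d - 1)) \<le> 4 * (real k * real d)" using d1 by (simp add: of_nat_diff algebra_simps)
    also have "\<dots> \<le> 4 * exp 1 * real d * real k"
    proof -
      have "real k * real d * 1 \<le> real k * real d * exp 1" using e1 kd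
        by (intro mult_left_mono) auto
      then show ?thesis by (simp add: algebra_simps)
    qed
    finally have ratio: "4 * real (k * (d - 1)) \<le> 2 ^ k\<^sub>\<beta>" using assms(9) by linarith
    have "(4::real) \<le> 4 * (real k * real d)" using kd by simp
    also have "\<dots> \<le> 4 * exp 1 * real d * real k"
    proof -
      have "real k * real d * 1 \<le> real k * real d * exp 1" using e1 kd
        by (intro mult_left_mono) auto
      then show ?thesis by (simp add: algebra_simps)
    qed
    finally have four: "(4::real) \<le> 2 ^ k\<^sub>\<beta>" using assms(9) by linarith
    have "card (AS W \<tau> C) > 0" by (rule lll_nonempty[OF fW fC kb deg ratio four]) simp
    then obtain \<sigma> where "\<sigma> \<in> AS W \<tau> C" by (metis card.empty less_irrefl all_not_in_conv)
    then show ?thesis unfolding AS_def by auto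
  qed
  then obtain \<sigma> where s: "\<sigma> \<in> Om W \<tau>" "\<forall>c\<in>C. \<not> bad c \<sigma>" by blast
  have "\<sigma> \<in> assigns V"
    using s(1) tau assms(7) unfolding Om_def assigns_def W_def by auto
  moreover have "satisfies \<sigma> C" using s(2) unfolding satisfies_def bad_def by blast
  moreover have "restr M \<sigma> = \<tau>"
    using s(1) tau unfolding Om_def assigns_def W_def restr_def by auto
  ultimately show ?thesis unfolding sat_assigns_def by blast
qed

lemma marg_pos:
  assumes fV: "finite V" and MV: "M \<subseteq> V" and ex: "\<exists>\<sigma>\<in>sat_assigns V C. restr M \<sigma> = \<tau>"
  shows "marg V C M \<tau> > 0"
proof -
  obtain \<sigma> where s: "\<sigma> \<in> sat_assigns V C" "restr M \<sigma> = \<tau>" using ex by blast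
  have fS: "finite (sat_assigns V C)" using finite_assigns[OF fV] unfolding sat_assigns_def by auto
  have "card (sat_assigns V C) > 0" using s fS card_gt_0_iff by blast
  then have pos: "mu V C \<sigma> > 0" using s unfolding mu_def by simp
  have "\<sigma> \<in> {\<sigma> \<in> assigns V. restr M \<sigma> = \<tau>}" using s unfolding sat_assigns_def by auto
  moreover have "finite {\<sigma> \<in> assigns V. restr M \<sigma> = \<tau>}" using finite_assigns[OF fV] by auto
  ultimately have "mu V C \<sigma> \<le> marg V C M \<tau>" unfolding marg_def
    by (intro member_le_sum mu_nonneg)
  then show ?thesis using pos by linarith
qed

theorem lemma4p2:
  fixes V M :: "'v set" and C :: "'v clause set" and k d k\<^sub>\<alpha> k\<^sub>\<beta> :: nat
  assumes "cnf_formula V C"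
    and "k_uniform k C"
    and "max_var_degree_le V C d"
    and "k\<^sub>\<alpha> \<ge> 1" and "k\<^sub>\<beta> \<ge> 1" and "k\<^sub>\<alpha> + k\<^sub>\<beta> \<le> k"
    and "M \<subseteq> V"
    and "\<forall>c\<in>C. card (clause_vars c \<inter> M) \<ge> k\<^sub>\<alpha> \<and> card (clause_vars c - M) \<ge> k\<^sub>\<beta>"
    and "(2::real) ^ k\<^sub>\<beta> \<ge> 4 * exp 1 * real d * real k"
  shows "(\<forall>\<tau>\<in>assigns M. marg V C M \<tau> > 0)
    \<and> stationary (assigns M) (glauber V C M) (marg V C M)
    \<and> (\<forall>\<pi>. stationary (assigns M) (glauber V C M) \<pi> \<longrightarrow> (\<forall>\<tau>\<in>assigns M. \<pi> \<tau> = marg V C M \<tau>))"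
proof -
  have fV: "finite V" using assms(1) by (simp add: cnf_formula_def)
  have MV: "M \<subseteq> V" by fact
  have fM: "finite M" using fV MV finite_subset by blast
  define A where "A = assigns M"
  have fA: "finite A" unfolding A_def by (rule finite_assigns[OF fM])
  define \<mu> where "\<mu> = marg V C M"
  define P where "P = glauber V C M"
  have ext: "\<exists>\<sigma>\<in>sat_assigns V C. restr M \<sigma> = \<tau>" if "\<tau> \<in> assigns M" for \<tau>
    by (rule exists_ext[OF assms that])
  have pos: "\<forall>\<tau>\<in>assigns M. marg V C M \<tau> > 0"
    using marg_pos[OF fV MV ext] by blast
  have z: "(\<lambda>_. False) \<in> A" unfolding A_def assigns_def by simp
  have Ane: "A \<noteq> {}" using z by blast
  have sum1: "sum \<mu> A = 1"
  proof -
    have fAV: "finite (assigns V)" by (rule finite_assigns[OF fV])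
    have img: "restr M ` assigns V \<subseteq> A" unfolding A_def assigns_def restr_def by auto
    have "sum \<mu> A = (\<Sum>\<tau>\<in>A. sum (mu V C) {\<sigma>. \<sigma> \<in> assigns V \<and> restr M \<sigma> = \<tau>})"
      unfolding \<mu>_def marg_def by simp
    also have "\<dots> = sum (mu V C) (assigns V)" by (rule sum.group[OF fAV fA img])
    also have "\<dots> = sum (mu V C) (sat_assigns V C)"
      by (rule sum.mono_neutral_right[OF fAV]) (auto simp: sat_assigns_def mu_def)
    also have "\<dots> = 1"
    proof -
      obtain \<sigma> where "\<sigma> \<in> sat_assigns V C" using ext[of "\<lambda>_. False"] z unfolding A_def by blast
      moreover have "finite (sat_assigns V C)" using fAV unfolding sat_assigns_def by auto
      ultimately have "card (sat_assigns V C) > 0" using card_gt_0_iff by blast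
      then show ?thesis unfolding mu_def by simp
    qed
    finally show ?thesis .
  qed
  have db: "\<mu> x * P x y = \<mu> y * P y x" if "x \<in> A" "y \<in> A" for x y
    unfolding \<mu>_def P_def using detailed_balance[OF fV] that unfolding A_def by blast
  have rs: "(\<Sum>y\<in>A. P x y) = 1" if "x \<in> A" for x
    unfolding P_def A_def using row_sum[OF fV MV _ pos] that unfolding A_def by blast
  have Pnn: "P x y \<ge> 0" for x y unfolding P_def by (rule glauber_nonneg)
  have mpos: "\<mu> x > 0" if "x \<in> A" for x using pos that unfolding \<mu>_def A_def by blast
  have stat: "stationary A P \<mu>"
    unfolding stationary_def
  proof (intro conjI ballI)
    show "0 \<le> \<mu> x" if "x \<in> A" for x using mpos[OF that] by simp
    show "sum \<mu> A = 1" by (rule sum1)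
    fix y assume y: "y \<in> A"
    have "(\<Sum>x\<in>A. \<mu> x * P x y) = (\<Sum>x\<in>A. \<mu> y * P y x)"
      using db y by (intro sum.cong) auto
    also have "\<dots> = \<mu> y" using rs[OF y] by (simp add: sum_distrib_left[symmetric])
    finally show "(\<Sum>x\<in>A. \<mu> x * P x y) = \<mu> y" .
  qed
  have uniq: "\<forall>\<tau>\<in>A. \<pi> \<tau> = \<mu> \<tau>" if st: "stationary A P \<pi>" for \<pi>
  proof -
    define h where "h x = \<pi> x / \<mu> x" for x
    have harm: "(\<Sum>x\<in>A. P y x * h x) = h y" if y: "y \<in> A" for y
    proof -
      have "\<mu> y * (\<Sum>x\<in>A. P y x * h x) = (\<Sum>x\<in>A. (\<mu> y * P y x) * h x)"
        by (simp add: sum_distrib_left mult.assoc)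
      also have "\<dots> = (\<Sum>x\<in>A. (\<mu> x * P x y) * h x)"
        using db y by (intro sum.cong) auto
      also have "\<dots> = (\<Sum>x\<in>A. \<pi> x * P x y)"
      proof (rule sum.cong[OF refl])
        fix x assume "x \<in> A"
        then have "\<mu> x \<noteq> 0" using mpos[of x] by simp
        then show "\<mu> x * P x y * h x = \<pi> x * P x y" unfolding h_def by (simp add: field_simps)
      qed
      also have "\<dots> = \<pi> y" using st y unfolding stationary_def by blast
      finally show ?thesis using mpos[OF y] unfolding h_def by (simp add: field_simps)
    qed
    define m where "m = Max (h ` A)"
    have hle: "h x \<le> m" if "x \<in> A" for x unfolding m_def using fA that by simp
    obtain y0 where y0: "y0 \<in> A" "h y0 = m"
    proof -
      have "Max (h ` A) \<in> h ` A" using fA Ane by (intro Max_in) auto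
      then obtain y where "y \<in> A" "Max (h ` A) = h y" by (rule imageE) auto
      then show ?thesis using that[of y] unfolding m_def by simp
    qed
    have propg: "h x = m" if y: "y \<in> A" "h y = m" and x: "x \<in> A" "P y x > 0" for x y
    proof -
      have "(\<Sum>z\<in>A. P y z * (m - h z)) = m * (\<Sum>z\<in>A. P y z) - (\<Sum>z\<in>A. P y z * h z)"
        by (simp add: algebra_simps sum_subtractf sum_distrib_left)
      also have "\<dots> = 0" using rs[OF y(1)] harm[OF y(1)] y(2) by simp
      finally have "(\<Sum>z\<in>A. P y z * (m - h z)) = 0" .
      moreover have "\<forall>z\<in>A. P y z * (m - h z) \<ge> 0" using Pnn hle by simp
      ultimately have "\<forall>z\<in>A. P y z * (m - h z) = 0"
        using sum_nonneg_eq_0_iff[OF fA, of "\<lambda>z. P y z * (m - h z)"] by simp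
      then have "P y x * (m - h x) = 0" using x(1) by simp
      then show ?thesis using x(2) by simp
    qed
    have conn: "finite F \<Longrightarrow> F \<subseteq> M \<Longrightarrow> \<forall>Y\<in>A. (\<forall>u. Y u \<noteq> y0 u \<longrightarrow> u \<in> F) \<longrightarrow> h Y = m" for F
    proof (induction F rule: finite_induct)
      case empty
      show ?case
      proof (intro ballI impI)
        fix Y assume "Y \<in> A" "\<forall>u. Y u \<noteq> y0 u \<longrightarrow> u \<in> {}"
        then have "Y = y0" by auto
        then show "h Y = m" using y0 by simp
      qed
    next
      case (insert u F)
      show ?case
      proof (intro ballI impI)
        fix Y assume Y: "Y \<in> A" and dY: "\<forall>w. Y w \<noteq> y0 w \<longrightarrow> w \<in> insert u F"
        have uM: "u \<in> M" using insert.prems by auto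
        define Y' where "Y' = Y(u := y0 u)"
        have Y'A: "Y' \<in> A" unfolding Y'_def A_def using upd_assigns[OF _ uM] Y unfolding A_def by blast
        have "\<forall>w. Y' w \<noteq> y0 w \<longrightarrow> w \<in> F" using dY unfolding Y'_def by auto
        then have hY': "h Y' = m" using insert.IH insert.prems Y'A by auto
        have YY: "Y'(u := Y u) = Y" unfolding Y'_def by simp
        have "P Y' (Y'(u := Y u)) > 0" unfolding P_def
          by (rule flip_pos[OF fV MV _ uM pos]) (use Y'A in \<open>simp add: A_def\<close>)
        then have "P Y' Y > 0" using YY by simp
        then show "h Y = m" using propg[OF Y'A hY' Y] by simp
      qed
    qed
    have hall: "h Y = m" if "Y \<in> A" for Y
    proof -
      have "\<forall>u. Y u \<noteq> y0 u \<longrightarrow> u \<in> M" using that y0(1) unfolding A_def assigns_def by auto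
      then show ?thesis using conn[OF fM order_refl] that by blast
    qed
    have pieq: "\<pi> x = m * \<mu> x" if "x \<in> A" for x
      using hall[OF that] mpos[OF that] unfolding h_def by (simp add: field_simps)
    have "sum \<pi> A = (\<Sum>x\<in>A. m * \<mu> x)" using pieq by (intro sum.cong) auto
    then have "sum \<pi> A = m * sum \<mu> A" by (simp add: sum_distrib_left)
    then have "m = 1" using st sum1 unfolding stationary_def by simp
    then show ?thesis using pieq by simp
  qed
  show ?thesis
    using pos stat uniq unfolding A_def \<mu>_def P_def by blast
qed

end
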